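(* Let $v \ge 81$ be an integer. Then \[ \beta(2,v,4) \le \left\lfloor \frac{2v-3}{3} \right\rfloor, \] and \[ \beta(2,v,4) \ge \begin{cases} \frac{2v-6}{3} & \text{if } v \equiv 0 \pmod 3,\\ \frac{2v-8}{3} & \text{if } v \equiv 1 \pmod 3,\\ \frac{2v-4}{3} & \text{if } v \equiv 2 \pmod 3. \end{cases} \]
   Context: For integers $v \ge k \ge 2$, a $(v,k)$-packing is a pair $(X,\mathcal{B})$ where $X$ is a set of $v$ points and $\mathcal{B}$ is a set of $k$-subsets of $X$ (blocks) such that every pair of distinct points lies in at most one block. A partial parallel class (PPC) is a set of pairwise disjoint blocks; its size is the number of blocks. A PPC of size $\rho$ is maximum if the packing has no PPC of size $\rho+1$. $\beta(\rho,v,k)$ denotes the maximum number of blocks in a $(v,k)$-packing in which the maximum PPC has size $\rho$. *)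

theory Defs
  imports Complex_Main
begin

definition packing :: "nat set \<Rightarrow> nat \<Rightarrow> nat set set \<Rightarrow> bool" where
  "packing X k \<B> \<longleftrightarrow>
     (\<forall>B\<in>\<B>. B \<subseteq> X \<and> card B = k) \<and>
     (\<forall>x\<in>X. \<forall>y\<in>X. x \<noteq> y \<longrightarrow> card {B\<in>\<B>. x \<in> B \<and> y \<in> B} \<le> 1)"

definition ppc :: "nat set set \<Rightarrow> nat set set \<Rightarrow> bool" where
  "ppc \<B> P \<longleftrightarrow> P \<subseteq> \<B> \<and> (\<forall>B\<in>P. \<forall>C\<in>P. B \<noteq> C \<longrightarrow> B \<inter> C = {})"

definition max_ppc_size :: "nat set set \<Rightarrow> nat \<Rightarrow> bool" where
  "max_ppc_size \<B> \<rho> \<longleftrightarrow>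
     (\<exists>P. ppc \<B> P \<and> card P = \<rho>) \<and> \<not> (\<exists>P. ppc \<B> P \<and> card P = \<rho> + 1)"

definition beta :: "nat \<Rightarrow> nat \<Rightarrow> nat \<Rightarrow> nat" where
  "beta \<rho> v k = Max {card \<B> | \<B>. packing {..<v} k \<B> \<and> max_ppc_size \<B> \<rho>}"

end

theory Submission
  imports Defs
begin


definition lin :: "nat set set \<Rightarrow> bool" where
 "lin F \<longleftrightarrow> (\<forall>B\<in>F. \<forall>C\<in>F. \<forall>x y. x \<noteq> y \<and> x\<in>B \<and> y\<in>B \<and> x\<in>C \<and> y\<in>C \<longrightarrow> B = C)"

lemma linD: "lin F \<Longrightarrow> B\<in>F \<Longrightarrow> C\<in>F \<Longrightarrow> x\<noteq>y \<Longrightarrow> x\<in>B \<Longrightarrow> y\<in>B \<Longrightarrow> x\<in>C \<Longrightarrow> y\<in>C \<Longrightarrow> B = C"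
  unfolding lin_def by blast

lemma packing_fin: "packing {..<v} k F \<Longrightarrow> finite F"
proof -
  assume "packing {..<v} k F"
  hence "F \<subseteq> Pow {..<v}" unfolding packing_def by auto
  thus ?thesis by (rule finite_subset) simp
qed

lemma packing_lin: assumes p: "packing {..<v} k F" shows "lin F"
proof (unfold lin_def, intro ballI allI impI)
  fix B C x y assume B: "B\<in>F" "C\<in>F" and h: "x \<noteq> y \<and> x\<in>B \<and> y\<in>B \<and> x\<in>C \<and> y\<in>C"
  have "B \<subseteq> {..<v}" using p B unfolding packing_def by auto
  hence "x\<in>{..<v}" "y\<in>{..<v}" using h by auto
  hence le: "card {D\<in>F. x\<in>D \<and> y\<in>D} \<le> Suc 0" using p h unfolding packing_def by auto
  have fin: "finite {D\<in>F. x\<in>D \<and> y\<in>D}" using packing_fin[OF p] by simp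
  show "B = C" using le B h unfolding card_le_Suc0_iff_eq[OF fin] by blast
qed

lemma c4_fin: "card B = 4 \<Longrightarrow> finite B"
  by (metis card.infinite zero_neq_numeral)

lemma D1:
  assumes fin: "finite F" and c4: "\<forall>B\<in>F. card B = 4" and lin: "lin F"
    and sub: "\<forall>B\<in>F. p\<in>B \<longrightarrow> B - {p} \<subseteq> Y" and finY: "finite Y"
  shows "3 * card {B\<in>F. p\<in>B} \<le> card Y"
proof -
  let ?S = "{B\<in>F. p\<in>B}"
  have "card (\<Union>B\<in>?S. B - {p}) = (\<Sum>B\<in>?S. card (B - {p}))"
  proof (rule card_UN_disjoint)
    show "finite ?S" using fin by simp
    show "\<forall>i\<in>?S. finite (i - {p})" using c4 c4_fin by blast
    show "\<forall>i\<in>?S. \<forall>j\<in>?S. i \<noteq> j \<longrightarrow> (i - {p}) \<inter> (j - {p}) = {}"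
      using linD[OF lin] by blast
  qed
  also have "\<dots> = (\<Sum>B\<in>?S. 3)"
    by (rule sum.cong) (use c4 c4_fin in auto)
  also have "\<dots> = 3 * card ?S" by simp
  finally have eq: "card (\<Union>B\<in>?S. B - {p}) = 3 * card ?S" .
  have "(\<Union>B\<in>?S. B - {p}) \<subseteq> Y" using sub by blast
  hence "card (\<Union>B\<in>?S. B - {p}) \<le> card Y" using finY by (rule card_mono[rotated])
  thus ?thesis using eq by simp
qed

lemma D1v:
  assumes fin: "finite F" and c4: "\<forall>B\<in>F. card B = 4" and lin: "lin F"
    and X: "\<forall>B\<in>F. B \<subseteq> {..<v}"
  shows "3 * card {B\<in>F. p\<in>B} \<le> v - 1"
proof (cases "p < v")
  case True
  have "3 * card {B\<in>F. p\<in>B} \<le> card ({..<v} - {p})"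
    by (rule D1[OF fin c4 lin]) (use X in auto)
  thus ?thesis using True by simp
next
  case False
  hence "{B\<in>F. p\<in>B} = {}" using X by auto
  hence "card {B\<in>F. p\<in>B} = 0" by (simp only: card.empty)
  thus ?thesis by simp
qed

lemma D2:
  assumes fin: "finite F" and c4: "\<forall>B\<in>F. card B = 4" and lin: "lin F"
    and X: "\<forall>B\<in>F. B \<subseteq> {..<v}" and pq: "p \<noteq> q" "p < v" "q < v"
  shows "3 * card {B\<in>F. p\<in>B \<or> q\<in>B} \<le> 2 * v - 3"
proof -
  have u: "{B\<in>F. p\<in>B \<or> q\<in>B} = {B\<in>F. p\<in>B} \<union> {B\<in>F. q\<in>B}" by auto
  have cu: "card ({B\<in>F. p\<in>B} \<union> {B\<in>F. q\<in>B}) + card ({B\<in>F. p\<in>B} \<inter> {B\<in>F. q\<in>B})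
     = card {B\<in>F. p\<in>B} + card {B\<in>F. q\<in>B}"
    by (rule card_Un_Int[symmetric]) (use fin in auto)
  have a: "3 * card {B\<in>F. p\<in>B} \<le> v - 1" by (rule D1v[OF fin c4 lin X])
  have b: "3 * card {B\<in>F. q\<in>B} \<le> v - 1" by (rule D1v[OF fin c4 lin X])
  show ?thesis
  proof (cases "{B\<in>F. p\<in>B} \<inter> {B\<in>F. q\<in>B} = {}")
    case True
    have a': "3 * card {B\<in>F. p\<in>B} \<le> card ({..<v} - {p,q})"
      by (rule D1[OF fin c4 lin]) (use X True in auto)
    have b': "3 * card {B\<in>F. q\<in>B} \<le> card ({..<v} - {p,q})"
      by (rule D1[OF fin c4 lin]) (use X True in auto)
    have "card ({..<v} - {p,q}) = v - 2" using pq by (simp add: card_Diff_subset)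
    thus ?thesis using a' b' cu True u by simp
  next
    case False
    hence "card ({B\<in>F. p\<in>B} \<inter> {B\<in>F. q\<in>B}) \<ge> 1" using fin
      by (simp add: Suc_le_eq card_gt_0_iff)
    moreover have "card {B\<in>F. p\<in>B \<or> q\<in>B} = card ({B\<in>F. p\<in>B} \<union> {B\<in>F. q\<in>B})" using u by simp
    moreover have "v \<ge> 2" using pq by linarith
    ultimately show ?thesis using a b cu by linarith
  qed
qed

lemma NS:
  assumes c4: "\<forall>B\<in>F. card B = 4" and lin: "lin F"
    and int: "\<forall>B\<in>F. \<forall>C\<in>F. B \<inter> C \<noteq> {}" and C0: "C0 \<in> F"
    and ns: "\<forall>y. \<exists>E\<in>F. y \<notin> E"
  shows "card F \<le> 16"
proof -
  have F: "F = (\<Union>y\<in>C0. {B\<in>F. y\<in>B})" using int C0 by blast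
  have fC0: "finite C0" using c4 C0 c4_fin by blast
  have each: "card {B\<in>F. y\<in>B} \<le> 4" for y
  proof -
    obtain E where E: "E\<in>F" "y\<notin>E" using ns by blast
    define f where "f B = (SOME z. z \<in> B \<inter> E)" for B
    have fz: "f B \<in> B \<inter> E" if "B\<in>F" for B
      unfolding f_def by (rule someI_ex) (use int that E in blast)
    have "inj_on f {B\<in>F. y\<in>B}"
    proof (rule inj_onI)
      fix B B' assume "B \<in> {B\<in>F. y\<in>B}" "B' \<in> {B\<in>F. y\<in>B}" "f B = f B'"
      thus "B = B'" using fz[of B] fz[of B'] E linD[OF lin, of B B' y "f B"] by auto
    qed
    moreover have "f ` {B\<in>F. y\<in>B} \<subseteq> E" using fz by blast
    ultimately have "card {B\<in>F. y\<in>B} \<le> card E"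
      using card_inj_on_le c4_fin c4 E by metis
    thus ?thesis using c4 E by simp
  qed
  have "card F \<le> (\<Sum>y\<in>C0. card {B\<in>F. y\<in>B})"
    by (subst F) (rule card_UN_le[OF fC0])
  also have "\<dots> \<le> (\<Sum>y\<in>C0. 4)" by (rule sum_mono) (rule each)
  also have "\<dots> = 16" using c4 C0 by simp
  finally show ?thesis .
qed



definition nd3 :: "nat set set \<Rightarrow> bool" where
 "nd3 F \<longleftrightarrow> (\<forall>B1\<in>F. \<forall>B2\<in>F. \<forall>B3\<in>F. B1 \<inter> B2 = {} \<longrightarrow> B1 \<inter> B3 = {} \<longrightarrow> B2 \<inter> B3 = {} \<longrightarrow> False)"

lemma nd3D: "nd3 F \<Longrightarrow> B1\<in>F \<Longrightarrow> B2\<in>F \<Longrightarrow> B3\<in>F \<Longrightarrow> B1 \<inter> B2 = {} \<Longrightarrow> B1 \<inter> B3 = {} \<Longrightarrow> B2 \<inter> B3 = {} \<Longrightarrow> False"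
  unfolding nd3_def by blast

lemma D8:
  assumes lin: "lin F" and nd: "nd3 F" and C: "C1 \<in> F" "C2 \<in> F" "C1 \<inter> C2 = {}"
    and p: "p \<notin> C1" "p \<notin> C2" and c4: "\<forall>B\<in>F. card B = 4"
  shows "card {B\<in>F. p\<in>B} \<le> 8"
proof -
  define f where "f B = (SOME z. z \<in> B \<inter> (C1 \<union> C2))" for B
  have fz: "f B \<in> B \<inter> (C1 \<union> C2)" if "B\<in>F" for B
  proof -
    have "\<exists>z. z \<in> B \<inter> (C1 \<union> C2)"
    proof (rule ccontr)
      assume "\<not> ?thesis"
      hence "B \<inter> C1 = {}" "B \<inter> C2 = {}" by auto
      thus False using nd3D[OF nd that C(1) C(2)] C(3) by blast
    qed
    thus ?thesis unfolding f_def by (rule someI_ex)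
  qed
  have "inj_on f {B\<in>F. p\<in>B}"
  proof (rule inj_onI)
    fix B B' assume h: "B \<in> {B\<in>F. p\<in>B}" "B' \<in> {B\<in>F. p\<in>B}" "f B = f B'"
    from h have B: "B\<in>F" "p\<in>B" and B': "B'\<in>F" "p\<in>B'" by auto
    have z: "f B \<in> B" "f B \<in> C1 \<union> C2" using fz[OF B(1)] by auto
    have z': "f B \<in> B'" using fz[OF B'(1)] h(3) by auto
    have ne: "p \<noteq> f B" using z p by auto
    show "B = B'" by (rule linD[OF lin B(1) B'(1) ne B(2) z(1) B'(2) z'])
  qed
  moreover have "f ` {B\<in>F. p\<in>B} \<subseteq> C1 \<union> C2" using fz by blast
  moreover have "finite (C1 \<union> C2)" using c4 C c4_fin by blast
  ultimately have "card {B\<in>F. p\<in>B} \<le> card (C1 \<union> C2)"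
    by (rule card_inj_on_le)
  also have "\<dots> \<le> card C1 + card C2" by (rule card_Un_le)
  also have "\<dots> = 8" using c4 C by simp
  finally show ?thesis .
qed

lemma Wb:
  assumes lin: "lin F" and A: "A1 \<inter> A2 = {}" "card A1 = 4" "card A2 = 4"
  shows "card {B\<in>F. B \<inter> A1 \<noteq> {} \<and> B \<inter> A2 \<noteq> {}} \<le> 16"
proof -
  let ?W = "{B\<in>F. B \<inter> A1 \<noteq> {} \<and> B \<inter> A2 \<noteq> {}}"
  define f where "f B = (SOME z. z \<in> B \<inter> A1, SOME z. z \<in> B \<inter> A2)" for B
  have fz: "fst (f B) \<in> B \<inter> A1 \<and> snd (f B) \<in> B \<inter> A2" if "B\<in>?W" for B
  proof -
    from that obtain a b where ab: "a\<in>B \<inter> A1" "b\<in>B \<inter> A2" by blast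
    have "(SOME z. z \<in> B \<inter> A1) \<in> B \<inter> A1" by (rule someI) (rule ab(1))
    moreover have "(SOME z. z \<in> B \<inter> A2) \<in> B \<inter> A2" by (rule someI) (rule ab(2))
    ultimately show ?thesis unfolding f_def by simp
  qed
  have "inj_on f ?W"
  proof (rule inj_onI)
    fix B B' assume h: "B \<in> ?W" "B' \<in> ?W" "f B = f B'"
    from fz[OF h(1)] have a1: "fst (f B) \<in> A1" and a2: "snd (f B) \<in> A2"
      and z: "fst (f B) \<in> B" "snd (f B) \<in> B" by simp_all
    have ne: "fst (f B) \<noteq> snd (f B)"
    proof
      assume "fst (f B) = snd (f B)"
      hence "fst (f B) \<in> A1 \<inter> A2" using a1 a2 by simp
      thus False using A(1) by simp
    qed
    from fz[OF h(2)] have z': "fst (f B) \<in> B'" "snd (f B) \<in> B'" unfolding h(3) by simp_all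
    show "B = B'" by (rule linD[OF lin _ _ ne z(1) z(2) z'(1) z'(2)]) (use h in auto)
  qed
  moreover have "f ` ?W \<subseteq> A1 \<times> A2"
  proof
    fix x assume "x \<in> f ` ?W"
    then obtain B where "B \<in> ?W" "x = f B" by blast
    thus "x \<in> A1 \<times> A2" using fz[of B] by (simp add: mem_Times_iff)
  qed
  moreover have "finite (A1 \<times> A2)" by (intro finite_cartesian_product c4_fin A(2) A(3))
  ultimately have "card ?W \<le> card (A1 \<times> A2)" by (rule card_inj_on_le)
  thus ?thesis using A by (simp add: card_cartesian_product)
qed

lemma int_le16:
  assumes c4: "\<forall>B\<in>F. card B = 4" and lin: "lin F" and fin: "finite F"
    and int: "\<forall>B\<in>F. \<forall>C\<in>F. B \<inter> C \<noteq> {}" and C0: "C0 \<in> F"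
    and deg: "\<forall>q. card {B\<in>F. q\<in>B} \<le> 16"
  shows "card F \<le> 16"
proof (cases "\<exists>q. \<forall>B\<in>F. q \<in> B")
  case True
  then obtain q where "\<forall>B\<in>F. q \<in> B" by blast
  hence "F = {B\<in>F. q\<in>B}" by blast
  hence "card F = card {B\<in>F. q\<in>B}" by (rule arg_cong)
  thus ?thesis using deg by simp
next
  case False
  show ?thesis by (rule NS[OF c4 lin int C0]) (use False in blast)
qed

lemma UB:
  assumes fin: "finite F" and c4: "\<forall>B\<in>F. card B = 4" and lin: "lin F"
    and X: "\<forall>B\<in>F. B \<subseteq> {..<v}" and nd: "nd3 F"
    and A: "A1 \<in> F" "A2 \<in> F" "A1 \<inter> A2 = {}" and v: "v \<ge> 81"
  shows "3 * card F \<le> 2 * v - 3"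
proof (cases "\<exists>p. \<forall>B\<in>F. \<forall>C\<in>F. p \<notin> B \<and> p \<notin> C \<longrightarrow> B \<inter> C \<noteq> {}")
  case True
  then obtain p where p: "\<forall>B\<in>F. \<forall>C\<in>F. p \<notin> B \<and> p \<notin> C \<longrightarrow> B \<inter> C \<noteq> {}" by blast
  let ?R = "{B\<in>F. p \<notin> B}"
  have pin: "p \<in> A1 \<or> p \<in> A2" using p A by blast
  hence pv: "p < v" using X A by blast
  have Sp: "3 * card {B\<in>F. p\<in>B} \<le> v - 1" by (rule D1v[OF fin c4 lin X])
  have split: "F = {B\<in>F. p\<in>B} \<union> ?R" by blast
  have cF: "card F \<le> card {B\<in>F. p\<in>B} + card ?R"
    by (subst split) (rule card_Un_le)
  show ?thesis
  proof (cases "?R = {}")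
    case True
    hence "card ?R = 0" by (simp only: card.empty)
    thus ?thesis using cF Sp v by linarith
  next
    case Rne: False
    show ?thesis
    proof (cases "\<exists>q. \<forall>B\<in>?R. q \<in> B")
      case True
      then obtain q where q: "\<forall>B\<in>?R. q \<in> B" by blast
      obtain B0 where B0: "B0 \<in> ?R" using Rne by blast
      have qp: "q \<noteq> p" using q B0 by blast
      have qv: "q < v" using q B0 X by blast
      have "F = {B\<in>F. p\<in>B \<or> q\<in>B}" using q by blast
      hence "card F = card {B\<in>F. p\<in>B \<or> q\<in>B}" by (rule arg_cong)
      thus ?thesis using D2[OF fin c4 lin X qp[symmetric] pv qv] by simp
    next
      case False
      obtain B0 where B0: "B0 \<in> ?R" using Rne by blast
      have "card ?R \<le> 16"
      proof (rule NS[of ?R B0])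
        show "\<forall>B\<in>?R. card B = 4" using c4 by simp
        show "lin ?R" using lin unfolding lin_def by blast
        show "\<forall>B\<in>?R. \<forall>C\<in>?R. B \<inter> C \<noteq> {}" using p by blast
        show "B0 \<in> ?R" by (rule B0)
        show "\<forall>y. \<exists>E\<in>?R. y \<notin> E" using False by blast
      qed
      thus ?thesis using cF Sp v by linarith
    qed
  qed
next
  case False
  have deg: "card {B\<in>F. q\<in>B} \<le> 8" for q
  proof -
    obtain B C where "B\<in>F" "C\<in>F" "q\<notin>B" "q\<notin>C" "B \<inter> C = {}" using False by blast
    thus ?thesis using D8[OF lin nd, of B C q] c4 by blast
  qed
  have deg16: "\<forall>q. card {B\<in>G. q\<in>B} \<le> 16" if "G \<subseteq> F" for G
  proof
    fix q
    have "card {B\<in>G. q\<in>B} \<le> card {B\<in>F. q\<in>B}" by (rule card_mono) (use fin that in auto)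
    thus "card {B\<in>G. q\<in>B} \<le> 16" using deg[of q] by linarith
  qed
  let ?U1 = "{B\<in>F. B \<inter> A2 = {}}" and ?U2 = "{B\<in>F. B \<inter> A1 = {}}"
    and ?W = "{B\<in>F. B \<inter> A1 \<noteq> {} \<and> B \<inter> A2 \<noteq> {}}"
  have cov: "F = ?U1 \<union> ?U2 \<union> ?W" by blast
  have linsub: "lin G" if "G \<subseteq> F" for G using lin that unfolding lin_def by blast
  have u1: "card ?U1 \<le> 16"
  proof (rule int_le16[of _ A1])
    show "\<forall>B\<in>?U1. \<forall>C\<in>?U1. B \<inter> C \<noteq> {}"
      using nd3D[OF nd, of _ _ A2] A by blast
    show "\<forall>B\<in>?U1. card B = 4" using c4 by simp
    show "lin ?U1" by (rule linsub) blast
    show "finite ?U1" using fin by simp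
    show "A1 \<in> ?U1" using A by blast
    show "\<forall>q. card {B\<in>?U1. q\<in>B} \<le> 16" by (rule deg16) blast
  qed
  have u2: "card ?U2 \<le> 16"
  proof (rule int_le16[of _ A2])
    show "\<forall>B\<in>?U2. \<forall>C\<in>?U2. B \<inter> C \<noteq> {}"
      using nd3D[OF nd, of _ _ A1] A by blast
    show "\<forall>B\<in>?U2. card B = 4" using c4 by simp
    show "lin ?U2" by (rule linsub) blast
    show "finite ?U2" using fin by simp
    show "A2 \<in> ?U2" using A by blast
    show "\<forall>q. card {B\<in>?U2. q\<in>B} \<le> 16" by (rule deg16) blast
  qed
  have w: "card ?W \<le> 16" by (rule Wb[OF lin A(3)]) (use c4 A in auto)
  have "card F \<le> card ?U1 + card ?U2 + card ?W"
    by (subst cov) (meson card_Un_le add_right_mono le_trans)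
  thus ?thesis using u1 u2 w v by linarith
qed



lemma M0: "(a::nat) \<le> b \<Longrightarrow> a mod m = b mod m \<Longrightarrow> b - a < m \<Longrightarrow> a = b"
proof -
  assume h: "a \<le> b" "a mod m = b mod m" "b - a < m"
  hence "m dvd b - a" using mod_eq_dvd_iff_nat[of a b m] by simp
  hence "b - a = 0" using h(3) by (metis dvd_imp_le le_less_trans not_gr0 order.irrefl)
  thus ?thesis using h(1) by simp
qed
lemma M1: assumes eq: "(d + s) mod m = (d + s') mod (m::nat)" and lt: "s < m" "s' < m" shows "s = s'"
proof (cases "s \<le> s'")
  case True
  have "s' - s < m" using lt(2) diff_le_self le_less_trans by blast
  have "d + s = d + s'" by (rule M0) (use True eq \<open>s' - s < m\<close> in simp_all)
  thus ?thesis by simp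
next
  case False
  have "s - s' < m" using lt(1) diff_le_self le_less_trans by blast
  have "d + s' = d + s" by (rule M0) (use False eq \<open>s - s' < m\<close> in simp_all)
  thus ?thesis by simp
qed
lemma M2: assumes eq: "(d + s) mod m = (d' + s) mod (m::nat)" and lt: "d < m" "d' < m" shows "d = d'"
proof (cases "d \<le> d'")
  case True
  have "d' - d < m" using lt(2) diff_le_self le_less_trans by blast
  have "d + s = d' + s" by (rule M0) (use True eq \<open>d' - d < m\<close> in simp_all)
  thus ?thesis by simp
next
  case False
  have "d - d' < m" using lt(1) diff_le_self le_less_trans by blast
  have "d' + s = d + s" by (rule M0) (use False eq \<open>d - d' < m\<close> in simp_all)
  thus ?thesis by simp
qed

definition pt :: "nat \<Rightarrow> nat \<Rightarrow> nat" where "pt s c = 2 + s + 3 * c"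
definition col :: "nat \<Rightarrow> nat set" where "col c = (\<lambda>s. pt s c) ` {..<3}"
definition dg :: "nat \<Rightarrow> nat \<Rightarrow> nat set" where "dg m d = (\<lambda>s. pt s ((d + s) mod m)) ` {..<3}"
definition fam :: "nat \<Rightarrow> nat set set" where
  "fam m = (\<lambda>c. insert 0 (col c)) ` {..<m} \<union> (\<lambda>d. insert 1 (dg m d)) ` {..<m}"

lemma pt_inj: "pt s c = pt s' c' \<Longrightarrow> s < 3 \<Longrightarrow> s' < 3 \<Longrightarrow> s = s' \<and> c = c'"
  unfolding pt_def by presburger

lemma pt_ge: "pt s c \<ge> 2" unfolding pt_def by simp

lemma three: "{..<3::nat} = {0,1,2}" by auto

lemma col_eq: "col c = {pt 0 c, pt 1 c, pt 2 c}"
  unfolding col_def three by simp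
lemma dg_eq: "dg m d = {pt 0 ((d + 0) mod m), pt 1 ((d + 1) mod m), pt 2 ((d + 2) mod m)}"
  unfolding dg_def three by simp

lemma card3_pts: "card {pt 0 a, pt 1 b, pt 2 c} = 3"
proof -
  have "pt 0 a \<noteq> pt 1 b" "pt 0 a \<noteq> pt 2 c" "pt 1 b \<noteq> pt 2 c"
    using pt_inj[of 0 a 1 b] pt_inj[of 0 a 2 c] pt_inj[of 1 b 2 c] by auto
  thus ?thesis by simp
qed

lemma card_blk: "card (insert e {pt 0 a, pt 1 b, pt 2 c}) = 4" if "e < 2"
proof -
  have "e \<notin> {pt 0 a, pt 1 b, pt 2 c}" using pt_ge[of 0 a] pt_ge[of 1 b] pt_ge[of 2 c] that by auto
  thus ?thesis using card3_pts[of a b c] by simp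
qed

lemma fam_cases:
  assumes "B \<in> fam m"
  obtains c where "c < m" "B = insert 0 (col c)" | d where "d < m" "B = insert 1 (dg m d)"
  using assms unfolding fam_def by blast

lemma fam_card: assumes "B \<in> fam m" shows "card B = 4"
  using assms
proof (cases rule: fam_cases)
  case (1 c) thus ?thesis using card_blk[of 0 c c c] by (simp add: col_eq)
next
  case (2 d) thus ?thesis using card_blk[of 1 "(d+0) mod m" "(d+1) mod m" "(d+2) mod m"] by (simp add: dg_eq)
qed

lemma fam_01: assumes "B \<in> fam m" shows "0 \<in> B \<or> 1 \<in> B"
  using assms by (cases rule: fam_cases) auto

lemma fam_sub: assumes "B \<in> fam m" and "3 * m + 2 \<le> v" shows "B \<subseteq> {..<v}"
proof -
  have m0: "m > 0" using assms(1) unfolding fam_def by auto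
  have ptb: "pt s c < v" if "s < 3" "c < m" for s c
  proof -
    have "c + 1 \<le> m" using that by simp
    hence "3 * c + 3 \<le> 3 * m" by simp
    thus ?thesis unfolding pt_def using that assms(2) by simp
  qed
  show ?thesis using assms(1)
  proof (cases rule: fam_cases)
    case (1 c) thus ?thesis using ptb assms(2) unfolding col_def by auto
  next
    case (2 d) thus ?thesis using ptb assms(2) m0 unfolding dg_def by auto
  qed
qed

lemma col_mem: "z \<in> col c \<Longrightarrow> \<exists>s<3. z = pt s c" unfolding col_def by auto
lemma dg_mem: "z \<in> dg m d \<Longrightarrow> \<exists>s<3. z = pt s ((d + s) mod m)" unfolding dg_def by auto
lemma col_nz: "z \<in> col c \<Longrightarrow> z \<ge> 2" using col_mem pt_ge by blast
lemma dg_nz: "z \<in> dg m d \<Longrightarrow> z \<ge> 2" using dg_mem pt_ge by blast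

lemma col_col: "z \<in> col c \<Longrightarrow> z \<in> col c' \<Longrightarrow> c = c'"
proof -
  assume h: "z \<in> col c" "z \<in> col c'"
  obtain s where s: "s < 3" "z = pt s c" using col_mem[OF h(1)] by blast
  obtain s' where s': "s' < 3" "z = pt s' c'" using col_mem[OF h(2)] by blast
  show ?thesis using pt_inj[of s c s' c'] s s' by simp
qed

lemma n0: "0 \<notin> insert 1 (dg m d)" using dg_nz by fastforce
lemma n1: "1 \<notin> insert 0 (col c)" using col_nz by fastforce

lemma dg_dg: "z \<in> dg m d \<Longrightarrow> z \<in> dg m d' \<Longrightarrow> d < m \<Longrightarrow> d' < m \<Longrightarrow> d = d'"
proof -
  assume h: "z \<in> dg m d" "z \<in> dg m d'" "d < m" "d' < m"
  obtain s where s: "s < 3" "z = pt s ((d + s) mod m)" using dg_mem[OF h(1)] by blast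
  obtain s' where s': "s' < 3" "z = pt s' ((d' + s') mod m)" using dg_mem[OF h(2)] by blast
  have "pt s ((d + s) mod m) = pt s' ((d' + s') mod m)" using s s' by simp
  hence "s = s' \<and> (d + s) mod m = (d' + s') mod m" using pt_inj s(1) s'(1) by blast
  hence "s = s'" "(d + s) mod m = (d' + s') mod m" by blast+
  thus ?thesis using M2[of d s m d'] h by simp
qed

lemma col_dg: "z \<in> col c \<Longrightarrow> z \<in> dg m d \<Longrightarrow> \<exists>s<3. z = pt s c \<and> c = (d + s) mod m"
proof -
  assume h: "z \<in> col c" "z \<in> dg m d"
  obtain s where s: "s < 3" "z = pt s c" using col_mem[OF h(1)] by blast
  obtain s' where s': "s' < 3" "z = pt s' ((d + s') mod m)" using dg_mem[OF h(2)] by blast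
  have "pt s c = pt s' ((d + s') mod m)" using s s' by simp
  hence "s = s' \<and> c = (d + s') mod m" using pt_inj s(1) s'(1) by blast
  hence "s = s'" "c = (d + s') mod m" by simp_all
  thus ?thesis using s by blast
qed

lemma col_dg2: assumes "x \<in> col c" "x \<in> dg m d" "y \<in> col c" "y \<in> dg m d" "x \<noteq> y" "m \<ge> 3"
  shows False
proof -
  obtain s where s: "s < 3" "x = pt s c" "c = (d + s) mod m" using col_dg[OF assms(1,2)] by blast
  obtain t where t: "t < 3" "y = pt t c" "c = (d + t) mod m" using col_dg[OF assms(3,4)] by blast
  have "s = t" using M1[of d s m t] s t assms(6) by simp
  thus False using s t assms(5) by simp
qed

lemma fam_lin: assumes "m \<ge> 3" shows "lin (fam m)"
  unfolding lin_def
proof (intro ballI allI impI)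
  fix B C x y assume B: "B \<in> fam m" and C: "C \<in> fam m" and h: "x \<noteq> y \<and> x \<in> B \<and> y \<in> B \<and> x \<in> C \<and> y \<in> C"
  show "B = C" using B
  proof (cases rule: fam_cases)
    case (1 c)
    note Bc = this
    show ?thesis using C
    proof (cases rule: fam_cases)
      case (1 c')
      obtain z where "z \<in> col c" "z \<in> col c'" using h Bc 1 by blast
      hence "c = c'" by (rule col_col)
      thus ?thesis using Bc 1 by simp
    next
      case (2 d)
      have "x \<noteq> 0" "y \<noteq> 0" "x \<noteq> 1" "y \<noteq> 1" using h Bc 2 n0[of m d] n1[of c] by auto
      hence "x \<in> col c" "y \<in> col c" "x \<in> dg m d" "y \<in> dg m d"
        using h Bc 2 by auto
      thus ?thesis using col_dg2 h assms by blast
    qed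
  next
    case (2 d)
    note Bd = this
    show ?thesis using C
    proof (cases rule: fam_cases)
      case (1 c)
      have "x \<noteq> 0" "y \<noteq> 0" "x \<noteq> 1" "y \<noteq> 1" using h Bd 1 n0[of m d] n1[of c] by auto
      hence "x \<in> col c" "y \<in> col c" "x \<in> dg m d" "y \<in> dg m d"
        using h Bd 1 by auto
      thus ?thesis using col_dg2 h assms by blast
    next
      case (2 d')
      obtain z where "z \<in> dg m d" "z \<in> dg m d'" using h Bd 2 by blast
      hence "d = d'" using dg_dg Bd 2 by blast
      thus ?thesis using Bd 2 by simp
    qed
  qed
qed

lemma fam_fin: "finite (fam m)" unfolding fam_def by simp

lemma fam_packing: assumes "m \<ge> 3" "3 * m + 2 \<le> v" shows "packing {..<v} 4 (fam m)"
  unfolding packing_def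
proof (intro conjI ballI impI)
  fix B assume "B \<in> fam m"
  thus "B \<subseteq> {..<v}" "card B = 4" using fam_sub fam_card assms by auto
next
  fix x y :: nat assume "x \<in> {..<v}" "y \<in> {..<v}" "x \<noteq> y"
  have fin: "finite {B \<in> fam m. x \<in> B \<and> y \<in> B}" using fam_fin by simp
  show "card {B \<in> fam m. x \<in> B \<and> y \<in> B} \<le> 1"
    using card_le_Suc0_iff_eq[OF fin] linD[OF fam_lin[OF assms(1)]] \<open>x \<noteq> y\<close> by auto
qed

lemma fam_cardF: assumes "m \<ge> 3" shows "card (fam m) = 2 * m"
proof -
  let ?A = "(\<lambda>c. insert 0 (col c)) ` {..<m}" and ?B = "(\<lambda>d. insert 1 (dg m d)) ` {..<m}"
  have i1: "inj_on (\<lambda>c. insert 0 (col c)) {..<m}"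
  proof (rule inj_onI)
    fix c c' assume eq: "insert 0 (col c) = insert 0 (col c')"
    have a: "pt 0 c \<in> col c" unfolding col_def by (rule image_eqI[of _ _ 0]) simp_all
    have ne: "pt 0 c \<noteq> 0" unfolding pt_def by simp
    from a have "pt 0 c \<in> insert 0 (col c)" by simp
    hence "pt 0 c \<in> insert 0 (col c')" unfolding eq .
    hence "pt 0 c \<in> col c'" using ne by simp
    thus "c = c'" by (rule col_col[OF a])
  qed
  have i2: "inj_on (\<lambda>d. insert 1 (dg m d)) {..<m}"
  proof (rule inj_onI)
    fix d d' assume h: "d \<in> {..<m}" "d' \<in> {..<m}" and eq: "insert 1 (dg m d) = insert 1 (dg m d')"
    have a: "pt 0 ((d + 0) mod m) \<in> dg m d" unfolding dg_def by (rule image_eqI[of _ _ 0]) simp_all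
    have ne: "pt 0 ((d + 0) mod m) \<noteq> 1" unfolding pt_def by simp
    from a have "pt 0 ((d + 0) mod m) \<in> insert 1 (dg m d)" by simp
    hence "pt 0 ((d + 0) mod m) \<in> insert 1 (dg m d')" unfolding eq .
    hence b: "pt 0 ((d + 0) mod m) \<in> dg m d'" using ne by simp
    have "d < m" "d' < m" using h by simp_all
    thus "d = d'" using dg_dg[OF a b] by blast
  qed
  have dis: "?A \<inter> ?B = {}"
  proof -
    have "False" if "X \<in> ?A" "X \<in> ?B" for X
    proof -
      have "0 \<in> X" using that(1) by auto
      moreover have "0 \<notin> X" using that(2) n0 by auto
      ultimately show False by simp
    qed
    thus ?thesis by blast
  qed
  have "card (fam m) = card ?A + card ?B" unfolding fam_def
    by (rule card_Un_disjoint) (use dis in auto)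
  also have "\<dots> = m + m" using card_image[OF i1] card_image[OF i2] by simp
  finally show ?thesis by simp
qed

lemma fam_ppc: assumes "m \<ge> 4" shows "max_ppc_size (fam m) 2"
  unfolding max_ppc_size_def
proof (intro conjI notI)
  let ?B0 = "insert 0 (col 0)" and ?B1 = "insert 1 (dg m 1)"
  have in0: "?B0 \<in> fam m" using assms unfolding fam_def by auto
  have in1: "?B1 \<in> fam m" using assms unfolding fam_def by auto
  have m1: "(1 + 1) mod m = 2" "(1 + 2) mod m = 3" "(1 + 0) mod m = 1" using assms by auto
  have e0: "?B0 = {0, 2, 3, 4}" unfolding col_eq pt_def by auto
  have e1: "?B1 = {1, 5, 9, 13}" unfolding dg_eq pt_def m1 by simp
  have dis: "?B0 \<inter> ?B1 = {}" unfolding e0 e1 by auto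
  have ne: "?B0 \<noteq> ?B1" using dis e0 by auto
  show "\<exists>P. ppc (fam m) P \<and> card P = 2"
    by (rule exI[of _ "{?B0, ?B1}"]) (use in0 in1 dis ne in \<open>auto simp: ppc_def\<close>)
next
  assume "\<exists>P. ppc (fam m) P \<and> card P = 2 + 1"
  then obtain P where P: "ppc (fam m) P" "card P = 3" by auto
  then obtain a b c where abc: "P = {a,b,c}" "a \<noteq> b" "b \<noteq> c" "a \<noteq> c" using card_3_iff by metis
  have sub: "a \<in> fam m" "b \<in> fam m" "c \<in> fam m" using P(1) abc unfolding ppc_def by auto
  have d: "a \<inter> b = {}" "a \<inter> c = {}" "b \<inter> c = {}" using P(1) abc unfolding ppc_def by auto
  have x: "\<not> (0 \<in> a \<and> 0 \<in> b)" "\<not> (1 \<in> a \<and> 1 \<in> b)" "\<not> (0 \<in> a \<and> 0 \<in> c)"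
    "\<not> (1 \<in> a \<and> 1 \<in> c)" "\<not> (0 \<in> b \<and> 0 \<in> c)" "\<not> (1 \<in> b \<and> 1 \<in> c)"
    using d by blast+
  show False using fam_01[OF sub(1)] fam_01[OF sub(2)] fam_01[OF sub(3)] x by argo
qed



lemma ppc_nd3: assumes p: "packing {..<v} 4 F" and mp: "max_ppc_size F 2" shows "nd3 F"
  unfolding nd3_def
proof (intro ballI impI)
  fix B1 B2 B3 assume B: "B1 \<in> F" "B2 \<in> F" "B3 \<in> F" and d: "B1 \<inter> B2 = {}" "B1 \<inter> B3 = {}" "B2 \<inter> B3 = {}"
  have c4: "card B = 4" if "B \<in> F" for B using p that unfolding packing_def by auto
  have ne: "B \<noteq> {}" if "B \<in> F" for B using c4[OF that] by auto
  have n12: "B1 \<noteq> B2" using d(1) ne[OF B(1)] by auto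
  have n13: "B1 \<noteq> B3" using d(2) ne[OF B(1)] by auto
  have n23: "B2 \<noteq> B3" using d(3) ne[OF B(2)] by auto
  have "ppc F {B1, B2, B3}" unfolding ppc_def using B d by (auto simp: Int_commute)
  moreover have "card {B1, B2, B3} = 2 + 1" using n12 n13 n23 by simp
  ultimately show False using mp unfolding max_ppc_size_def by blast
qed

lemma ppc_two: assumes mp: "max_ppc_size F 2" obtains A1 A2 where "A1 \<in> F" "A2 \<in> F" "A1 \<inter> A2 = {}"
proof -
  obtain P where P: "ppc F P" "card P = 2" using mp unfolding max_ppc_size_def by blast
  then obtain a b where ab: "P = {a, b}" "a \<noteq> b" using card_2_iff by metis
  have "a \<in> F" "b \<in> F" "a \<inter> b = {}" using P(1) ab unfolding ppc_def by auto
  thus ?thesis using that by blast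
qed

theorem theorem4p2:
  fixes v :: nat
  assumes "v \<ge> 81"
  shows "beta 2 v 4 \<le> (2 * v - 3) div 3 \<and>
         real (beta 2 v 4) \<ge>
           (if v mod 3 = 0 then (2 * real v - 6) / 3
            else if v mod 3 = 1 then (2 * real v - 8) / 3
            else (2 * real v - 4) / 3)"
proof -
  define m where "m = (v - 2) div 3"
  have mv: "3 * m + 2 \<le> v" "v < 3 * m + 5" using assms unfolding m_def by presburger+
  have m4: "m \<ge> 4" using assms mv by linarith
  let ?S = "{card F | F. packing {..<v} 4 F \<and> max_ppc_size F 2}"
  have fam_in: "card (fam m) \<in> ?S"
    using fam_packing[of m v] fam_ppc[of m] m4 mv by auto
  have finS: "finite ?S"
  proof (rule finite_subset)
    show "?S \<subseteq> card ` Pow (Pow {..<v})"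
    proof
      fix n assume "n \<in> ?S"
      then obtain F where F: "n = card F" "packing {..<v} 4 F" by blast
      have "F \<in> Pow (Pow {..<v})" using F(2) unfolding packing_def by auto
      thus "n \<in> card ` Pow (Pow {..<v})" using F(1) by blast
    qed
  qed simp
  have "beta 2 v 4 \<in> ?S" unfolding beta_def by (rule Max_in[OF finS]) (use fam_in in blast)
  then obtain F where F: "beta 2 v 4 = card F" "packing {..<v} 4 F" "max_ppc_size F 2" by blast
  obtain A1 A2 where A: "A1 \<in> F" "A2 \<in> F" "A1 \<inter> A2 = {}" using ppc_two[OF F(3)] by blast
  have "3 * card F \<le> 2 * v - 3"
  proof (rule UB[OF packing_fin[OF F(2)] _ packing_lin[OF F(2)] _ ppc_nd3[OF F(2,3)] A assms])
    show "\<forall>B\<in>F. card B = 4" "\<forall>B\<in>F. B \<subseteq> {..<v}" using F(2) unfolding packing_def by auto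
  qed
  hence up: "beta 2 v 4 \<le> (2 * v - 3) div 3" using F(1) by (simp add: less_eq_div_iff_mult_less_eq)
  have "card (fam m) \<le> beta 2 v 4" unfolding beta_def by (rule Max_ge[OF finS fam_in])
  hence low: "2 * m \<le> beta 2 v 4" using fam_cardF[of m] m4 by simp
  have "(if v mod 3 = 0 then (2 * real v - 6) / 3
            else if v mod 3 = 1 then (2 * real v - 8) / 3
            else (2 * real v - 4) / 3) = real (2 * m)"
  proof -
    have v3: "v = 3 * (v div 3) + v mod 3" by simp
    have r: "v mod 3 < 3" by simp
    consider "v mod 3 = 0" | "v mod 3 = 1" | "v mod 3 = 2" using r by linarith
    thus ?thesis
    proof cases
      case 1
      hence "v = 3 * m + 3" using mv by presburger
      thus ?thesis using 1 by simp
    next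
      case 2
      hence "v = 3 * m + 4" using mv by presburger
      thus ?thesis using 2 by simp
    next
      case 3
      hence "v = 3 * m + 2" using mv by presburger
      thus ?thesis using 3 by simp
    qed
  qed
  moreover have "real (2 * m) \<le> real (beta 2 v 4)" using low by simp
  ultimately show ?thesis using up by simp
qed

end
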